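(* Suppose either $R=0$, or $X$ and $Y$ are independent under $P_{XY}$ (i.e. $P_{XY}=P_XP_Y$). Then $$\sup_{Q_Y}\ \inf_{Q_{U\mid Y}:\ I(Q_{Y;U})\le R}\ \sup_{Q_{X\mid YU}}\Big(\rho\, R_D(Q_{X\mid U})-D\big(Q_{XYU}\,\|\,P_{XY}Q_{U\mid Y}\big)\Big) =\sup_{Q_X}\Big(\rho\,R_D(Q_X)-D(Q_X\|P_X)\Big),$$ where $R_D(Q_X)=\min_{Q_{\hat X\mid X}:\ \mathbb{E}[d(X,\hat X)]\le D} I(X;\hat X)$ is the (unconditional) rate–distortion function of $Q_X$.
   Context: $\mathcal{X},\mathcal{Y},\hat{\mathcal{X}}$ are finite sets, $P_{XY}$ is a PMF on $\mathcal{X}\times\mathcal{Y}$ with $X$-marginal $P_X$ and $Y$-marginal $P_Y$, $d\colon\mathcal{X}\times\hat{\mathcal{X}}\to\mathbb{R}_{\ge0}$, $D>0$, $R\ge0$, $\rho>0$. The optimization on the left is over $Q_Y\in\mathcal{P}(\mathcal{Y})$, a finite set $\mathcal{U}$, $Q_{U\mid Y}\in\mathcal{P}(\mathcal{U}\mid\mathcal{Y})$, $Q_{X\mid YU}\in\mathcal{P}(\mathcal{X}\mid\mathcal{Y}\times\mathcal{U})$ with quantities evaluated under $Q_{XYU}=Q_YQ_{U\mid Y}Q_{X\mid YU}$; on the right over $Q_X\in\mathcal{P}(\mathcal{X})$. $R_D(Q_{X\mid U})=\min_{Q_{\hat X\mid XU}:\ \mathbb{E}[d(X,\hat X)]\le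 D} I(X;\hat X\mid U)$ evaluated under $Q_{\hat X\mid XU}Q_{XU}$. $P_{XY}Q_{U\mid Y}$ denotes $(x,y,u)\mapsto P_{XY}(x,y)Q_{U\mid Y}(u\mid y)$. Logarithms are base 2. *)

theory Defs
  imports "HOL-Analysis.Analysis"
begin

definition pmf_on :: "'a set \<Rightarrow> ('a \<Rightarrow> real) \<Rightarrow> bool" where
  "pmf_on S p \<longleftrightarrow> (\<forall>a\<in>S. 0 \<le> p a) \<and> sum p S = 1"

definition channel_on :: "'a set \<Rightarrow> 'b set \<Rightarrow> ('a \<Rightarrow> 'b \<Rightarrow> real) \<Rightarrow> bool" where
  "channel_on A B W \<longleftrightarrow> (\<forall>a\<in>A. pmf_on B (W a))"

definition kl_div :: "'a set \<Rightarrow> ('a \<Rightarrow> real) \<Rightarrow> ('a \<Rightarrow> real) \<Rightarrow> ereal" where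
  "kl_div S q p =
     (if \<exists>a\<in>S. 0 < q a \<and> p a = 0 then \<infinity>
      else ereal (\<Sum>a\<in>S. if 0 < q a then q a * log 2 (q a / p a) else 0))"

definition mutual_info :: "'a set \<Rightarrow> 'b set \<Rightarrow> ('a \<Rightarrow> 'b \<Rightarrow> real) \<Rightarrow> ereal" where
  "mutual_info A B q =
     kl_div (A \<times> B) (\<lambda>(a, b). q a b)
       (\<lambda>(a, b). (\<Sum>b'\<in>B. q a b') * (\<Sum>a'\<in>A. q a' b))"

definition cond_mutual_info ::
  "'a set \<Rightarrow> 'b set \<Rightarrow> 'c set \<Rightarrow> ('a \<Rightarrow> 'b \<Rightarrow> 'c \<Rightarrow> real) \<Rightarrow> ereal" where
  "cond_mutual_info A B C q =
     kl_div (A \<times> B \<times> C) (\<lambda>(a, b, c). q a b c)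
       (\<lambda>(a, b, c). (\<Sum>b'\<in>B. q a b' c) * (\<Sum>a'\<in>A. q a' b c)
                      / (\<Sum>a'\<in>A. \<Sum>b'\<in>B. q a' b' c))"

text \<open>Rate-distortion function R_D(Q_X) = min over test channels Q_{Xhat|X} with
  E[d(X,Xhat)] <= D of I(X;Xhat) (infimum in the extended reals; +infinity if no
  channel is feasible).\<close>
definition rate_dist :: "('x::finite \<Rightarrow> 'xh::finite \<Rightarrow> real) \<Rightarrow> real \<Rightarrow> ('x \<Rightarrow> real) \<Rightarrow> ereal" where
  "rate_dist d D qX =
     (INF W \<in> {W. channel_on UNIV UNIV W \<and>
                  (\<Sum>x\<in>UNIV. \<Sum>xh\<in>UNIV. qX x * W x xh * d x xh) \<le> D}.
        mutual_info UNIV UNIV (\<lambda>x xh. qX x * W x xh))"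

definition cond_rate_dist ::
  "('x::finite \<Rightarrow> 'xh::finite \<Rightarrow> real) \<Rightarrow> real \<Rightarrow> 'u set \<Rightarrow> ('x \<Rightarrow> 'u \<Rightarrow> real) \<Rightarrow> ereal" where
  "cond_rate_dist d D Us qXU =
     (INF W \<in> {W. channel_on (UNIV \<times> Us) UNIV W \<and>
                  (\<Sum>x\<in>UNIV. \<Sum>u\<in>Us. \<Sum>xh\<in>UNIV. qXU x u * W (x, u) xh * d x xh) \<le> D}.
        cond_mutual_info UNIV UNIV Us (\<lambda>x xh u. qXU x u * W (x, u) xh))"

end

theory Submission
  imports Defs
begin


definition klt :: "real \<Rightarrow> real \<Rightarrow> real" where
  "klt a b = (if 0 < a then a * log 2 (a / b) else 0)"

lemma kl_div_klt: "kl_div S q p = (if \<exists>a\<in>S. 0 < q a \<and> p a = 0 then \<infinity> else ereal (\<Sum>a\<in>S. klt (q a) (p a)))"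
  unfolding kl_div_def klt_def by simp

lemma ln_ge_1_minus_inv: "0 < (t::real) \<Longrightarrow> 1 - 1/t \<le> ln t"
  using ln_le_minus_one[of "1/t"] by (simp add: ln_div)

lemma klt_ge: assumes "0 < q" "0 < p" shows "(q - p) / ln 2 \<le> klt q p"
proof -
  have "1 - p/q \<le> ln (q/p)" using ln_ge_1_minus_inv[of "q/p"] assms by simp
  hence "q - p \<le> q * ln (q/p)" using assms by (simp add: field_simps)
  thus ?thesis using assms by (simp add: klt_def log_def divide_right_mono)
qed

lemma klt_eq: assumes "0 < q" "0 < p" "klt q p = (q - p) / ln 2" shows "q = p"
proof -
  have "q * ln (q/p) = q - p" using assms by (simp add: klt_def log_def)
  hence "ln (q/p) = 1 - p/q" using assms by (simp add: field_simps)
  hence "ln (p/q) = p/q - 1" using assms by (simp add: ln_div)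
  hence "p/q = 1" using ln_eq_minus_one[of "p/q"] assms by simp
  thus ?thesis using assms by simp
qed

lemma logsum_term: assumes "0 < q" "0 < p" "0 < Q" "0 < P"
  shows "(q - p*Q/P)/ln 2 \<le> q*log 2 (q/p) - q*log 2 (Q/P)"
proof -
  have t: "0 < (q*P)/(p*Q)" using assms by simp
  have "1 - (p*Q)/(q*P) \<le> ln ((q*P)/(p*Q))" using ln_ge_1_minus_inv[OF t] by simp
  also have "ln ((q*P)/(p*Q)) = ln (q/p) - ln (Q/P)" using assms by (simp add: ln_div ln_mult)
  finally have "q - p*Q/P \<le> q * (ln (q/p) - ln (Q/P))" using assms
    by (simp add: field_simps)
  hence "(q - p*Q/P)/ln 2 \<le> q * (ln (q/p) - ln (Q/P)) / ln 2" by (simp add: divide_right_mono)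
  thus ?thesis by (simp add: log_def field_simps)
qed

lemma logsum:
  assumes fin: "finite T" and nq: "\<forall>t\<in>T. 0 \<le> q t" and np: "\<forall>t\<in>T. 0 \<le> p t"
    and ac: "\<forall>t\<in>T. 0 < q t \<longrightarrow> 0 < p t"
  shows "klt (\<Sum>t\<in>T. q t) (\<Sum>t\<in>T. p t) \<le> (\<Sum>t\<in>T. klt (q t) (p t))"
proof (cases "(\<Sum>t\<in>T. q t) = 0")
  case True
  then show ?thesis
    by (simp add: klt_def sum_nonneg_eq_0_iff[OF fin] nq)
next
  case False
  define Q where "Q = (\<Sum>t\<in>T. q t)"
  define P where "P = (\<Sum>t\<in>T. p t)"
  have Qp: "0 < Q" using False nq unfolding Q_def by (simp add: order_less_le sum_nonneg)
  obtain t0 where t0: "t0 \<in> T" "0 < q t0"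
    using Qp unfolding Q_def by (metis (no_types, lifting) leD sum_nonpos not_le)
  have "p t0 \<le> P" unfolding P_def using member_le_sum[OF t0(1), of p] np fin by auto
  hence Pp: "0 < P" using ac t0 by force
  have key: "\<forall>t\<in>T. (q t - p t*Q/P)/ln 2 \<le> klt (q t) (p t) - q t * log 2 (Q/P)"
  proof
    fix t assume t: "t \<in> T"
    show "(q t - p t*Q/P)/ln 2 \<le> klt (q t) (p t) - q t * log 2 (Q/P)"
    proof (cases "0 < q t")
      case True
      then show ?thesis using logsum_term[OF True _ Qp Pp, of "p t"] ac t by (simp add: klt_def)
    next
      case False
      hence "q t = 0" using nq t by force
      moreover have "0 \<le> p t * Q / P / ln 2" using np t Qp Pp by simp
      ultimately show ?thesis by (simp add: klt_def)
    qed
  qed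
  have "(\<Sum>t\<in>T. (q t - p t*Q/P)/ln 2) \<le> (\<Sum>t\<in>T. klt (q t) (p t) - q t * log 2 (Q/P))"
    by (rule sum_mono) (use key in auto)
  moreover have "(\<Sum>t\<in>T. (q t - p t*Q/P)/ln 2) = (Q - P*Q/P)/ln 2"
    unfolding Q_def P_def by (simp add: sum_divide_distrib[symmetric] sum_subtractf sum_distrib_right[symmetric])
  moreover have "(\<Sum>t\<in>T. klt (q t) (p t) - q t * log 2 (Q/P)) = (\<Sum>t\<in>T. klt (q t) (p t)) - Q * log 2 (Q/P)"
    unfolding Q_def by (simp add: sum_subtractf sum_distrib_right)
  ultimately have "0 \<le> (\<Sum>t\<in>T. klt (q t) (p t)) - Q * log 2 (Q/P)" using Pp by simp
  thus ?thesis using Qp unfolding Q_def[symmetric] P_def[symmetric] by (simp add: klt_def)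
qed

lemma kl_marginal:
  assumes "finite S" "finite T" and nf: "\<forall>z\<in>S\<times>T. 0 \<le> f z" and ng: "\<forall>z\<in>S\<times>T. 0 \<le> g z"
  shows "kl_div S (\<lambda>s. \<Sum>t\<in>T. f (s,t)) (\<lambda>s. \<Sum>t\<in>T. g (s,t)) \<le> kl_div (S\<times>T) f g"
proof (cases "\<exists>z\<in>S\<times>T. 0 < f z \<and> g z = 0")
  case True
  then show ?thesis by (simp add: kl_div_def)
next
  case False
  have ac: "\<forall>z\<in>S\<times>T. 0 < f z \<longrightarrow> 0 < g z" using False ng by force
  have nm: "\<not> (\<exists>s\<in>S. 0 < (\<Sum>t\<in>T. f (s,t)) \<and> (\<Sum>t\<in>T. g (s,t)) = 0)"
  proof
    assume "\<exists>s\<in>S. 0 < (\<Sum>t\<in>T. f (s,t)) \<and> (\<Sum>t\<in>T. g (s,t)) = 0"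
    then obtain s where s: "s \<in> S" "0 < (\<Sum>t\<in>T. f (s,t))" "(\<Sum>t\<in>T. g (s,t)) = 0" by blast
    obtain t where t: "t \<in> T" "0 < f (s,t)"
      using s(2) by (metis (no_types, lifting) leD sum_nonpos not_le)
    have "g (s,t) \<le> (\<Sum>t\<in>T. g (s,t))" using member_le_sum[OF t(1), of "\<lambda>t. g (s,t)"] ng s(1) assms(2) by auto
    moreover have "0 < g (s,t)" using ac s(1) t by auto
    ultimately show False using s(3) by simp
  qed
  have "(\<Sum>s\<in>S. klt (\<Sum>t\<in>T. f (s,t)) (\<Sum>t\<in>T. g (s,t))) \<le> (\<Sum>s\<in>S. \<Sum>t\<in>T. klt (f (s,t)) (g (s,t)))"
    by (rule sum_mono, rule logsum) (use assms ac in auto)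
  also have "\<dots> = (\<Sum>z\<in>S\<times>T. klt (f z) (g z))"
    by (simp add: sum.cartesian_product)
  finally show ?thesis using False nm by (simp add: kl_div_klt)
qed

lemma gibbs_eq:
  assumes fin: "finite S" and nq: "\<forall>a\<in>S. 0 \<le> q a" and np: "\<forall>a\<in>S. 0 \<le> p a"
    and sm: "sum q S = sum p S" and le: "kl_div S q p \<le> 0"
  shows "\<forall>a\<in>S. q a = p a"
proof -
  have nm: "\<not> (\<exists>a\<in>S. 0 < q a \<and> p a = 0)"
  proof
    assume "\<exists>a\<in>S. 0 < q a \<and> p a = 0"
    hence "kl_div S q p = \<infinity>" by (simp add: kl_div_def)
    thus False using le by simp
  qed
  hence ac: "\<forall>a\<in>S. 0 < q a \<longrightarrow> 0 < p a" using np by force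
  have s0: "(\<Sum>a\<in>S. klt (q a) (p a)) \<le> 0" using le nm by (simp add: kl_div_klt)
  define h where "h a = klt (q a) (p a) - (q a - p a)/ln 2" for a
  have hn: "\<forall>a\<in>S. 0 \<le> h a"
  proof
    fix a assume a: "a \<in> S"
    show "0 \<le> h a"
    proof (cases "0 < q a")
      case True thus ?thesis using klt_ge[OF True] ac a by (simp add: h_def)
    next
      case False hence "q a = 0" using nq a by force
      thus ?thesis using np a by (simp add: h_def klt_def)
    qed
  qed
  have "sum h S = (\<Sum>a\<in>S. klt (q a) (p a)) - (sum q S - sum p S)/ln 2"
    unfolding h_def by (simp add: sum_subtractf sum_divide_distrib[symmetric])
  hence "sum h S \<le> 0" using s0 sm by simp
  hence "sum h S = 0" using hn by (simp add: sum_nonneg antisym)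
  hence h0: "\<forall>a\<in>S. h a = 0" using sum_nonneg_eq_0_iff[OF fin] hn by blast
  show ?thesis
  proof
    fix a assume a: "a \<in> S"
    show "q a = p a"
    proof (cases "0 < q a")
      case True thus ?thesis using klt_eq[OF True] ac a h0 by (simp add: h_def)
    next
      case False hence "q a = 0" using nq a by force
      moreover have "h a = 0" using h0 a by blast
      ultimately show ?thesis by (simp add: h_def klt_def)
    qed
  qed
qed

lemma kl_cong: assumes "\<forall>a\<in>S. q a = q' a \<and> p a = p' a" shows "kl_div S q p = kl_div S q' p'"
  using assms unfolding kl_div_def by (auto intro!: sum.cong)

lemma kl_reindex: assumes "bij_betw h S' S"
  shows "kl_div S q p = kl_div S' (q \<circ> h) (p \<circ> h)"
proof -
  have "(\<exists>a\<in>S. 0 < q a \<and> p a = 0) = (\<exists>a\<in>S'. 0 < q (h a) \<and> p (h a) = 0)"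
    using assms by (metis bij_betw_apply bij_betw_inv_into_right bij_betw_inv_into bij_betw_imp_surj_on imageE)
  moreover have "(\<Sum>a\<in>S. klt (q a) (p a)) = (\<Sum>a\<in>S'. klt (q (h a)) (p (h a)))"
    using sum.reindex_bij_betw[OF assms, of "\<lambda>a. klt (q a) (p a)"] by simp
  ultimately show ?thesis by (simp add: kl_div_klt)
qed

lemma kl_self: "kl_div S q q = 0"
  unfolding kl_div_def by (auto intro!: sum.neutral)



lemma lt1: "{..<1::nat} = {0}" by auto

lemma cond_rd_cong: assumes "\<forall>x. \<forall>u\<in>Us. f x u = g x u"
  shows "cond_rate_dist d D Us f = cond_rate_dist d D Us g"
proof -
  have s: "\<And>W. (\<Sum>x\<in>UNIV. \<Sum>u\<in>Us. \<Sum>xh\<in>UNIV. f x u * W (x, u) xh * d x xh)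
     = (\<Sum>x\<in>UNIV. \<Sum>u\<in>Us. \<Sum>xh\<in>UNIV. g x u * W (x, u) xh * d x xh)"
    using assms by (intro sum.cong refl) auto
  have i: "\<And>W. cond_mutual_info UNIV UNIV Us (\<lambda>x xh u. f x u * W (x, u) xh)
           = cond_mutual_info UNIV UNIV Us (\<lambda>x xh u. g x u * W (x, u) xh)"
    unfolding cond_mutual_info_def using assms by (intro kl_cong) auto
  show ?thesis unfolding cond_rate_dist_def s i ..
qed

lemma cond_one: fixes qq :: "'x::finite \<Rightarrow> real" and d :: "'x \<Rightarrow> 'xh::finite \<Rightarrow> real"
  assumes "(\<Sum>x\<in>UNIV. qq x) = 1"
  shows "cond_rate_dist d D {..<1::nat} (\<lambda>x u. qq x) \<le> rate_dist d D qq"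
  unfolding cond_rate_dist_def rate_dist_def
proof (rule INF_mono)
  fix W assume W: "W \<in> {W. channel_on UNIV UNIV W \<and> (\<Sum>x\<in>UNIV. \<Sum>xh\<in>UNIV. qq x * W x xh * d x xh) \<le> D}"
  hence ch: "\<forall>x. pmf_on UNIV (W x)" and dd: "(\<Sum>x\<in>UNIV. \<Sum>xh\<in>UNIV. qq x * W x xh * d x xh) \<le> D"
    by (auto simp: channel_on_def)
  let ?W = "\<lambda>(x::'x,u::nat). W x"
  have m: "?W \<in> {W. channel_on (UNIV \<times> {..<1::nat}) UNIV W \<and>
          (\<Sum>x\<in>UNIV. \<Sum>u\<in>{..<1::nat}. \<Sum>xh\<in>UNIV. qq x * W (x, u) xh * d x xh) \<le> D}"
    using ch dd by (auto simp: channel_on_def lt1)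
  have W1: "\<And>x. (\<Sum>b\<in>UNIV. W x b) = 1" using ch by (simp add: pmf_on_def)
  have tot: "(\<Sum>a'\<in>UNIV. \<Sum>b'\<in>UNIV. qq a' * W a' b') = 1"
    using assms by (simp add: sum_distrib_left[symmetric] W1)
  have bij: "bij_betw (\<lambda>(x::'x,xh::'xh). (x,xh,0::nat)) (UNIV \<times> UNIV) (UNIV \<times> UNIV \<times> {..<1::nat})"
    by (auto simp: bij_betw_def inj_on_def lt1 image_def)
  have "cond_mutual_info UNIV UNIV {..<1::nat} (\<lambda>x xh u. qq x * ?W (x, u) xh)
        = mutual_info UNIV UNIV (\<lambda>x xh. qq x * W x xh)" (is "?L = _")
    unfolding cond_mutual_info_def mutual_info_def
    apply (subst kl_reindex[OF bij])
    apply (rule kl_cong)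
    using tot by (auto simp: lt1)
  show "\<exists>n\<in>{W. channel_on (UNIV \<times> {..<1::nat}) UNIV W \<and>
          (\<Sum>x\<in>UNIV. \<Sum>u\<in>{..<1::nat}. \<Sum>xh\<in>UNIV. qq x * W (x, u) xh * d x xh) \<le> D}.
          cond_mutual_info UNIV UNIV {..<1::nat} (\<lambda>x xh u. qq x * n (x, u) xh)
          \<le> mutual_info UNIV UNIV (\<lambda>x xh. qq x * W x xh)"
    apply (rule bexI[of _ ?W])
    using \<open>?L = _\<close> apply simp
    using ch dd by (auto simp: channel_on_def lt1)
qed



lemma rd_M:
  fixes q :: "'x::finite \<Rightarrow> real" and d :: "'x \<Rightarrow> 'xh::finite \<Rightarrow> real" and w :: "'u \<Rightarrow> real"
  assumes q: "pmf_on UNIV q" and w: "pmf_on Us w" and fin: "finite Us"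
  shows "rate_dist d D q \<le> cond_rate_dist d D Us (\<lambda>x u. q x * w u)"
  unfolding cond_rate_dist_def
proof (rule INF_greatest)
  fix W assume W: "W \<in> {W. channel_on (UNIV \<times> Us) UNIV W \<and>
        (\<Sum>x\<in>UNIV. \<Sum>u\<in>Us. \<Sum>xh\<in>UNIV. q x * w u * W (x, u) xh * d x xh) \<le> D}"
  hence ch: "\<And>x u. u \<in> Us \<Longrightarrow> pmf_on UNIV (W (x,u))"
    and dd: "(\<Sum>x\<in>UNIV. \<Sum>u\<in>Us. \<Sum>xh\<in>UNIV. q x * w u * W (x, u) xh * d x xh) \<le> D"
    by (auto simp: channel_on_def)
  have Wn: "\<And>x u xh. u \<in> Us \<Longrightarrow> 0 \<le> W (x,u) xh" using ch by (simp add: pmf_on_def)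
  have W1: "\<And>x u. u \<in> Us \<Longrightarrow> (\<Sum>xh\<in>UNIV. W (x,u) xh) = 1" using ch by (simp add: pmf_on_def)
  have wn: "\<And>u. u \<in> Us \<Longrightarrow> 0 \<le> w u" and w1: "sum w Us = 1" using w by (auto simp: pmf_on_def)
  have qn: "\<And>x. 0 \<le> q x" and q1: "(\<Sum>x\<in>UNIV. q x) = 1" using q by (auto simp: pmf_on_def)
  define Wb where "Wb x xh = (\<Sum>u\<in>Us. w u * W (x,u) xh)" for x xh
  define r where "r u xh = (\<Sum>a\<in>UNIV. q a * W (a,u) xh)" for u xh
  have Wb1: "\<And>x. (\<Sum>xh\<in>UNIV. Wb x xh) = 1"
  proof -
    fix x
    have "(\<Sum>xh\<in>UNIV. Wb x xh) = (\<Sum>u\<in>Us. w u * (\<Sum>xh\<in>UNIV. W (x,u) xh))"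
      unfolding Wb_def by (subst sum.swap) (simp add: sum_distrib_left)
    also have "\<dots> = (\<Sum>u\<in>Us. w u)" by (rule sum.cong) (simp_all add: W1)
    finally show "(\<Sum>xh\<in>UNIV. Wb x xh) = 1" using w1 by simp
  qed
  have Wch: "channel_on UNIV UNIV Wb"
    unfolding channel_on_def pmf_on_def using Wb1
    by (auto simp: Wb_def intro!: sum_nonneg mult_nonneg_nonneg wn Wn)
  have dx: "\<And>x. (\<Sum>xh\<in>UNIV. q x * Wb x xh * d x xh) = (\<Sum>u\<in>Us. \<Sum>xh\<in>UNIV. q x * w u * W (x,u) xh * d x xh)"
    unfolding Wb_def by (subst sum.swap) (simp add: sum_distrib_left sum_distrib_right mult_ac)
  have Wd: "(\<Sum>x\<in>UNIV. \<Sum>xh\<in>UNIV. q x * Wb x xh * d x xh) \<le> D" using dd by (simp add: dx)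
  have "rate_dist d D q \<le> mutual_info UNIV UNIV (\<lambda>x xh. q x * Wb x xh)"
    unfolding rate_dist_def by (rule INF_lower) (simp add: Wch Wd)
  also have "\<dots> \<le> cond_mutual_info UNIV UNIV Us (\<lambda>x xh u. q x * w u * W (x, u) xh)"
  proof -
    define f where "f = (\<lambda>z::('x\<times>'xh)\<times>'u. case z of ((x,xh),u) \<Rightarrow> q x * w u * W (x,u) xh)"
    define g where "g = (\<lambda>z::('x\<times>'xh)\<times>'u. case z of ((x,xh),u) \<Rightarrow> q x * w u * r u xh)"
    have bij: "bij_betw (\<lambda>((x::'x,xh::'xh),u::'u). (x,xh,u)) ((UNIV \<times> UNIV) \<times> Us) (UNIV \<times> UNIV \<times> Us)"
      by (auto simp: bij_betw_def inj_on_def image_def)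
    have den: "\<And>u. u \<in> Us \<Longrightarrow> (\<Sum>a'\<in>UNIV. \<Sum>b'\<in>UNIV. q a' * w u * W (a', u) b') = w u"
      by (simp add: sum_distrib_left[symmetric] W1 q1 sum_distrib_right[symmetric] mult.commute)
    have den': "\<And>u. (\<Sum>a'\<in>UNIV. q a' * w u) = w u"
      by (simp add: sum_distrib_right[symmetric] q1)
    have canc: "\<And>x xh u. q x * w u * (w u * r u xh) / w u = q x * w u * r u xh"
      by (case_tac "w u = 0") auto
    have num1: "\<And>x u. u \<in> Us \<Longrightarrow> (\<Sum>b'\<in>UNIV. q x * w u * W (x, u) b') = q x * w u"
      by (simp add: sum_distrib_left[symmetric] W1)
    have num2: "\<And>xh u. (\<Sum>a'\<in>UNIV. q a' * w u * W (a', u) xh) = w u * r u xh"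
      unfolding r_def by (simp add: sum_distrib_left mult_ac)
    have "cond_mutual_info UNIV UNIV Us (\<lambda>x xh u. q x * w u * W (x, u) xh)
        = kl_div (UNIV \<times> UNIV \<times> Us) (\<lambda>(x,xh,u). q x * w u * W (x,u) xh) (\<lambda>(x,xh,u). q x * w u * r u xh)"
      unfolding cond_mutual_info_def
      by (rule kl_cong) (auto simp: den num1 num2 den' canc)
    also have "\<dots> = kl_div ((UNIV \<times> UNIV) \<times> Us) f g"
      by (subst kl_reindex[OF bij]) (simp add: f_def g_def comp_def case_prod_beta)
    finally have e1: "cond_mutual_info UNIV UNIV Us (\<lambda>x xh u. q x * w u * W (x, u) xh)
        = kl_div ((UNIV \<times> UNIV) \<times> Us) f g" .
    have m1: "\<And>x xh. (\<Sum>u\<in>Us. f ((x,xh),u)) = q x * Wb x xh"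
      unfolding f_def Wb_def by (simp add: sum_distrib_left mult_ac)
    have m2: "\<And>x xh. (\<Sum>u\<in>Us. g ((x,xh),u)) = (\<Sum>b'\<in>UNIV. q x * Wb x b') * (\<Sum>a'\<in>UNIV. q a' * Wb a' xh)"
    proof -
      fix x xh
      have "(\<Sum>a'\<in>UNIV. q a' * Wb a' xh) = (\<Sum>u\<in>Us. w u * r u xh)"
        unfolding Wb_def r_def apply (simp add: sum_distrib_left)
        apply (subst sum.swap) by (simp add: mult_ac)
      moreover have "(\<Sum>b'\<in>UNIV. q x * Wb x b') = q x" using Wb1 by (simp add: sum_distrib_left[symmetric])
      ultimately show "(\<Sum>u\<in>Us. g ((x,xh),u)) = (\<Sum>b'\<in>UNIV. q x * Wb x b') * (\<Sum>a'\<in>UNIV. q a' * Wb a' xh)"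
        unfolding g_def by (simp add: sum_distrib_left mult_ac)
    qed
    have "mutual_info UNIV UNIV (\<lambda>x xh. q x * Wb x xh)
        = kl_div (UNIV \<times> UNIV) (\<lambda>s. \<Sum>u\<in>Us. f (s,u)) (\<lambda>s. \<Sum>u\<in>Us. g (s,u))"
      unfolding mutual_info_def by (rule kl_cong) (auto simp: m1 m2)
    also have "\<dots> \<le> kl_div ((UNIV \<times> UNIV) \<times> Us) f g"
      apply (rule kl_marginal)
      using fin by (auto simp: f_def g_def r_def qn wn Wn intro!: mult_nonneg_nonneg sum_nonneg)
    finally show ?thesis using e1 by simp
  qed
  finally show "rate_dist d D q \<le> cond_mutual_info UNIV UNIV Us (\<lambda>x xh u. q x * w u * W (x, u) xh)" .
qed

lemma kl_eq:
  fixes P :: "'x::finite \<Rightarrow> 'y::finite \<Rightarrow> real" and q :: "'x \<Rightarrow> real"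
  assumes Pn: "\<forall>x y. 0 \<le> P x y" and qn: "\<forall>x. 0 \<le> q x"
    and ac: "\<forall>x. 0 < q x \<longrightarrow> 0 < (\<Sum>y\<in>UNIV. P x y)"
    and qy: "\<forall>x y. QY y * V y x = q x / (\<Sum>y\<in>UNIV. P x y) * P x y"
    and QU: "channel_on UNIV {..<k} QU"
  shows "kl_div (UNIV \<times> UNIV \<times> {..<k::nat}) (\<lambda>(x,y,u). QY y * QU y u * V y x) (\<lambda>(x,y,u). P x y * QU y u)
       = kl_div UNIV q (\<lambda>x. \<Sum>y\<in>UNIV. P x y)"
proof -
  define PX where "PX x = (\<Sum>y\<in>UNIV. P x y)" for x
  define c where "c x = q x / PX x" for x
  have PXn: "\<And>x. 0 \<le> PX x" unfolding PX_def using Pn by (simp add: sum_nonneg)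
  have cn: "\<And>x. 0 \<le> c x" unfolding c_def using qn PXn by simp
  have QUn: "\<And>y u. u < k \<Longrightarrow> 0 \<le> QU y u" and QU1: "\<And>y. (\<Sum>u\<in>{..<k}. QU y u) = 1"
    using QU by (auto simp: channel_on_def pmf_on_def)
  have qc: "\<And>x. q x = c x * PX x"
  proof -
    fix x show "q x = c x * PX x"
      using ac qn[rule_format, of x] unfolding c_def PX_def by (cases "q x = 0") (auto simp: less_le)
  qed
  have kltc: "\<And>c p. 0 \<le> c \<Longrightarrow> 0 \<le> p \<Longrightarrow> klt (c*p) p = c * p * log 2 c"
    by (auto simp: klt_def zero_less_mult_iff)
  have pw: "\<And>x y u. QY y * QU y u * V y x = c x * (P x y * QU y u)"
  proof -
    fix x y u
    have "QY y * QU y u * V y x = QU y u * (QY y * V y x)" by (simp add: mult_ac)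
    also have "\<dots> = QU y u * (c x * P x y)" using qy unfolding c_def PX_def by simp
    finally show "QY y * QU y u * V y x = c x * (P x y * QU y u)" by (simp add: mult_ac)
  qed
  have "kl_div (UNIV \<times> UNIV \<times> {..<k}) (\<lambda>(x,y,u). QY y * QU y u * V y x) (\<lambda>(x,y,u). P x y * QU y u)
      = kl_div (UNIV \<times> UNIV \<times> {..<k}) (\<lambda>(x,y,u). c x * (P x y * QU y u)) (\<lambda>(x,y,u). P x y * QU y u)"
    by (rule kl_cong) (auto simp: pw)
  also have "\<dots> = ereal (\<Sum>z\<in>UNIV \<times> UNIV \<times> {..<k}. klt (c (fst z) * (P (fst z) (fst (snd z)) * QU (fst (snd z)) (snd (snd z))))
            (P (fst z) (fst (snd z)) * QU (fst (snd z)) (snd (snd z))))"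
    by (auto simp: kl_div_klt case_prod_beta)
  also have "\<dots> = ereal (\<Sum>z\<in>UNIV \<times> UNIV \<times> {..<k}. c (fst z) * log 2 (c (fst z)) * (P (fst z) (fst (snd z)) * QU (fst (snd z)) (snd (snd z))))"
    by (intro arg_cong[where f=ereal] sum.cong refl) (auto simp: kltc cn Pn QUn)
  also have "\<dots> = ereal (\<Sum>x\<in>UNIV. c x * log 2 (c x) * PX x)"
  proof -
    have "\<And>x. (\<Sum>(y,u)\<in>UNIV \<times> {..<k}. P x y * QU y u) = PX x"
      unfolding PX_def by (simp add: sum.cartesian_product[symmetric] sum_distrib_left[symmetric] QU1)
    hence "\<And>x. (\<Sum>t\<in>UNIV \<times> {..<k}. P x (fst t) * QU (fst t) (snd t)) = PX x"
      by (simp add: case_prod_beta)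
    thus ?thesis
      by (subst sum.cartesian_product') (simp add: sum_distrib_left[symmetric])
  qed
  also have "\<dots> = kl_div UNIV q PX"
  proof -
    have "\<not> (\<exists>x\<in>UNIV. 0 < q x \<and> PX x = 0)" using ac unfolding PX_def by force
    moreover have "\<And>x. klt (q x) (PX x) = c x * log 2 (c x) * PX x"
    proof -
      fix x
      have "klt (q x) (PX x) = c x * PX x * log 2 (c x)"
        using kltc[OF cn PXn, of x x] qc[of x] by simp
      thus "klt (q x) (PX x) = c x * log 2 (c x) * PX x" by (simp add: mult_ac)
    qed
    ultimately show ?thesis by (simp add: kl_div_klt)
  qed
  finally show ?thesis unfolding PX_def .
qed



lemma lower_gen:
  fixes P :: "'x::finite \<Rightarrow> 'y::finite \<Rightarrow> real"
    and d :: "'x \<Rightarrow> 'xh::finite \<Rightarrow> real"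
    and D R \<rho> :: real and q :: "'x \<Rightarrow> real" and QY0 :: "'y \<Rightarrow> real" and V :: "'y \<Rightarrow> 'x \<Rightarrow> real"
  assumes P_nonneg: "\<forall>x y. 0 \<le> P x y"
    and rho_pos: "0 < \<rho>"
    and q: "pmf_on UNIV q" and QY0: "pmf_on UNIV QY0" and V: "\<forall>y. pmf_on UNIV (V y)"
    and H1: "\<And>(k::nat) QU. channel_on UNIV {..<k} QU \<Longrightarrow> mutual_info UNIV {..<k} (\<lambda>y u. QY0 y * QU y u) \<le> ereal R
         \<Longrightarrow> \<forall>x. \<forall>u<k. (\<Sum>y\<in>UNIV. QY0 y * QU y u * V y x) = q x * (\<Sum>y\<in>UNIV. QY0 y * QU y u)"
    and H2: "(\<forall>x. 0 < q x \<longrightarrow> 0 < (\<Sum>y\<in>UNIV. P x y)) \<Longrightarrow> \<forall>x y. QY0 y * V y x = q x / (\<Sum>y\<in>UNIV. P x y) * P x y"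
  shows "ereal \<rho> * rate_dist d D q - kl_div UNIV q (\<lambda>x. \<Sum>y\<in>UNIV. P x y) \<le>
    (SUP QY \<in> {QY. pmf_on UNIV QY}.
        INF kQ \<in> {(k::nat, QU). channel_on UNIV {..<k} QU \<and>
                    mutual_info UNIV {..<k} (\<lambda>y u. QY y * QU y u) \<le> ereal R}.
          (case kQ of (k, QU) \<Rightarrow>
            SUP QX \<in> {QX. channel_on (UNIV \<times> {..<k}) UNIV QX}.
              ereal \<rho> * cond_rate_dist d D {..<k}
                  (\<lambda>x u. \<Sum>y\<in>UNIV. QY y * QU y u * QX (y, u) x)
              - kl_div (UNIV \<times> UNIV \<times> {..<k})
                  (\<lambda>(x, y, u). QY y * QU y u * QX (y, u) x)
                  (\<lambda>(x, y, u). P x y * QU y u)))"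
proof (rule SUP_upper2[of QY0], simp add: QY0, rule INF_greatest, clarify)
  fix k :: nat and QU :: "'y \<Rightarrow> nat \<Rightarrow> real"
  assume ch: "channel_on UNIV {..<k} QU" and mi: "mutual_info UNIV {..<k} (\<lambda>y u. QY0 y * QU y u) \<le> ereal R"
  let ?V = "\<lambda>yu::'y\<times>nat. V (fst yu)"
  have Vch: "?V \<in> {QX. channel_on (UNIV \<times> {..<k}) UNIV QX}" using V by (simp add: channel_on_def)
  define w where "w u = (\<Sum>y\<in>UNIV. QY0 y * QU y u)" for u
  have QYn: "\<And>y. 0 \<le> QY0 y" and QY1: "(\<Sum>y\<in>UNIV. QY0 y) = 1" using QY0 by (auto simp: pmf_on_def)
  have QUn: "\<And>y u. u < k \<Longrightarrow> 0 \<le> QU y u" and QU1: "\<And>y. (\<Sum>u\<in>{..<k}. QU y u) = 1"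
    using ch by (auto simp: channel_on_def pmf_on_def)
  have wp: "pmf_on {..<k} w"
  proof -
    have "sum w {..<k} = (\<Sum>y\<in>UNIV. QY0 y * (\<Sum>u\<in>{..<k}. QU y u))"
      unfolding w_def by (subst sum.swap) (simp add: sum_distrib_left)
    thus ?thesis unfolding pmf_on_def w_def using QY1 QU1 QYn QUn
      by (auto intro!: sum_nonneg mult_nonneg_nonneg)
  qed
  have ceq: "cond_rate_dist d D {..<k} (\<lambda>x u. \<Sum>y\<in>UNIV. QY0 y * QU y u * ?V (y, u) x)
      = cond_rate_dist d D {..<k} (\<lambda>x u. q x * w u)"
    using H1[OF ch mi] unfolding w_def by (intro cond_rd_cong) simp
  have rle: "rate_dist d D q \<le> cond_rate_dist d D {..<k} (\<lambda>x u. \<Sum>y\<in>UNIV. QY0 y * QU y u * ?V (y, u) x)"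
    unfolding ceq by (rule rd_M[OF q wp]) simp
  have rle': "ereal \<rho> * rate_dist d D q \<le> ereal \<rho> * cond_rate_dist d D {..<k} (\<lambda>x u. \<Sum>y\<in>UNIV. QY0 y * QU y u * ?V (y, u) x)"
    using rle rho_pos by (intro ereal_mult_left_mono) auto
  have goal: "ereal \<rho> * rate_dist d D q - kl_div UNIV q (\<lambda>x. \<Sum>y\<in>UNIV. P x y) \<le>
       ereal \<rho> * cond_rate_dist d D {..<k} (\<lambda>x u. \<Sum>y\<in>UNIV. QY0 y * QU y u * ?V (y, u) x)
       - kl_div (UNIV \<times> UNIV \<times> {..<k}) (\<lambda>(x, y, u). QY0 y * QU y u * ?V (y, u) x) (\<lambda>(x, y, u). P x y * QU y u)"
  proof (cases "\<forall>x. 0 < q x \<longrightarrow> 0 < (\<Sum>y\<in>UNIV. P x y)")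
    case True
    have "kl_div (UNIV \<times> UNIV \<times> {..<k}) (\<lambda>(x, y, u). QY0 y * QU y u * ?V (y, u) x) (\<lambda>(x, y, u). P x y * QU y u)
        = kl_div UNIV q (\<lambda>x. \<Sum>y\<in>UNIV. P x y)"
      using kl_eq[OF P_nonneg _ True H2[OF True] ch] q by (simp add: pmf_on_def)
    thus ?thesis using rle' by (simp add: ereal_minus_mono)
  next
    case False
    hence inf: "kl_div UNIV q (\<lambda>x. \<Sum>y\<in>UNIV. P x y) = \<infinity>"
      using P_nonneg by (auto simp: kl_div_def less_le sum_nonneg)
    show ?thesis
    proof (cases "ereal \<rho> * rate_dist d D q = \<infinity>")
      case True
      hence "ereal \<rho> * cond_rate_dist d D {..<k} (\<lambda>x u. \<Sum>y\<in>UNIV. QY0 y * QU y u * ?V (y, u) x) = \<infinity>"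
        using rle' by (simp only: True ereal_infty_less_eq)
      show ?thesis unfolding \<open>ereal \<rho> * cond_rate_dist _ _ _ _ = \<infinity>\<close> by simp
    next
      case False
      have "ereal \<rho> * rate_dist d D q - \<infinity> = -\<infinity>"
        using False by (cases "ereal \<rho> * rate_dist d D q") auto
      thus ?thesis unfolding inf by simp
    qed
  qed
  show "ereal \<rho> * rate_dist d D q - kl_div UNIV q (\<lambda>x. \<Sum>y\<in>UNIV. P x y) \<le>
       (SUP QX \<in> {QX. channel_on (UNIV \<times> {..<k}) UNIV QX}.
              ereal \<rho> * cond_rate_dist d D {..<k}
                  (\<lambda>x u. \<Sum>y\<in>UNIV. QY0 y * QU y u * QX (y, u) x)
              - kl_div (UNIV \<times> UNIV \<times> {..<k})
                  (\<lambda>(x, y, u). QY0 y * QU y u * QX (y, u) x)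
                  (\<lambda>(x, y, u). P x y * QU y u))"
    apply (rule SUP_upper2[where i="?V"])
     apply (rule Vch)
    by (rule goal)
qed



lemma lt1': "{..<Suc 0} = {0}" by auto

theorem mainTheorem4:
  fixes P :: "'x::finite \<Rightarrow> 'y::finite \<Rightarrow> real"
    and d :: "'x \<Rightarrow> 'xh::finite \<Rightarrow> real"
    and D R \<rho> :: real
  assumes P_nonneg: "\<forall>x y. 0 \<le> P x y"
    and P_sum: "(\<Sum>x\<in>UNIV. \<Sum>y\<in>UNIV. P x y) = 1"
    and d_nonneg: "\<forall>x xh. 0 \<le> d x xh"
    and D_pos: "0 < D"
    and R_nonneg: "0 \<le> R"
    and rho_pos: "0 < \<rho>"
    and hyp: "R = 0 \<or> (\<forall>x y. P x y = (\<Sum>y'\<in>UNIV. P x y') * (\<Sum>x'\<in>UNIV. P x' y))"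
  shows
    "(SUP QY \<in> {QY. pmf_on UNIV QY}.
        INF kQ \<in> {(k::nat, QU). channel_on UNIV {..<k} QU \<and>
                    mutual_info UNIV {..<k} (\<lambda>y u. QY y * QU y u) \<le> ereal R}.
          (case kQ of (k, QU) \<Rightarrow>
            SUP QX \<in> {QX. channel_on (UNIV \<times> {..<k}) UNIV QX}.
              ereal \<rho> * cond_rate_dist d D {..<k}
                  (\<lambda>x u. \<Sum>y\<in>UNIV. QY y * QU y u * QX (y, u) x)
              - kl_div (UNIV \<times> UNIV \<times> {..<k})
                  (\<lambda>(x, y, u). QY y * QU y u * QX (y, u) x)
                  (\<lambda>(x, y, u). P x y * QU y u)))
     = (SUP QX \<in> {QX. pmf_on UNIV QX}.
          ereal \<rho> * rate_dist d D QX - kl_div UNIV QX (\<lambda>x. \<Sum>y\<in>UNIV. P x y))"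
    (is "?L = ?R")
proof (rule antisym)
  show "?L \<le> ?R"
  proof (rule SUP_least)
    fix QY :: "'y \<Rightarrow> real" assume QY: "QY \<in> {QY. pmf_on UNIV QY}"
    have QYn: "\<And>y. 0 \<le> QY y" and QY1: "(\<Sum>y\<in>UNIV. QY y) = 1" using QY by (auto simp: pmf_on_def)
    let ?U = "\<lambda>(y::'y) (u::nat). 1::real"
    have chU: "channel_on UNIV {..<1} ?U" by (simp add: channel_on_def pmf_on_def lt1)
    have "mutual_info UNIV {..<1} (\<lambda>y u. QY y * ?U y u) = kl_div (UNIV \<times> {..<1}) (\<lambda>(a,b). QY a * ?U a b) (\<lambda>(a,b). QY a * ?U a b)"
      unfolding mutual_info_def by (rule kl_cong) (auto simp: lt1 QY1)
    hence miU: "mutual_info UNIV {..<1} (\<lambda>y u. QY y * ?U y u) \<le> ereal R" using R_nonneg by (simp add: kl_self)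
    have "(INF kQ \<in> {(k::nat, QU). channel_on UNIV {..<k} QU \<and>
                    mutual_info UNIV {..<k} (\<lambda>y u. QY y * QU y u) \<le> ereal R}.
          (case kQ of (k, QU) \<Rightarrow>
            SUP QX \<in> {QX. channel_on (UNIV \<times> {..<k}) UNIV QX}.
              ereal \<rho> * cond_rate_dist d D {..<k}
                  (\<lambda>x u. \<Sum>y\<in>UNIV. QY y * QU y u * QX (y, u) x)
              - kl_div (UNIV \<times> UNIV \<times> {..<k})
                  (\<lambda>(x, y, u). QY y * QU y u * QX (y, u) x)
                  (\<lambda>(x, y, u). P x y * QU y u)))
       \<le> (SUP QX \<in> {QX. channel_on (UNIV \<times> {..<1}) UNIV QX}.
              ereal \<rho> * cond_rate_dist d D {..<1}
                  (\<lambda>x u. \<Sum>y\<in>UNIV. QY y * ?U y u * QX (y, u) x)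
              - kl_div (UNIV \<times> UNIV \<times> {..<1})
                  (\<lambda>(x, y, u). QY y * ?U y u * QX (y, u) x)
                  (\<lambda>(x, y, u). P x y * ?U y u))"
      apply (rule INF_lower2[where i="(1, ?U)"])
      using chU miU by auto
    also have "\<dots> \<le> ?R"
    proof (rule SUP_least)
      fix QX :: "'y \<times> nat \<Rightarrow> 'x \<Rightarrow> real" assume QX: "QX \<in> {QX. channel_on (UNIV \<times> {..<1}) UNIV QX}"
      have QXn: "\<And>y x. 0 \<le> QX (y,0) x" and QX1: "\<And>y. (\<Sum>x\<in>UNIV. QX (y,0) x) = 1"
        using QX by (auto simp: channel_on_def pmf_on_def lt1)
      define q' where "q' x = (\<Sum>y\<in>UNIV. QY y * QX (y,0) x)" for x
      have q'p: "pmf_on UNIV q'"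
      proof -
        have "(\<Sum>x\<in>UNIV. q' x) = (\<Sum>y\<in>UNIV. QY y * (\<Sum>x\<in>UNIV. QX (y,0) x))"
          unfolding q'_def by (subst sum.swap) (simp add: sum_distrib_left)
        thus ?thesis unfolding pmf_on_def using QY1 QX1 by (auto simp: q'_def QYn QXn intro!: sum_nonneg)
      qed
      have "cond_rate_dist d D {..<1} (\<lambda>x u. \<Sum>y\<in>UNIV. QY y * ?U y u * QX (y, u) x)
          = cond_rate_dist d D {..<1::nat} (\<lambda>x u. q' x)"
        by (rule cond_rd_cong) (simp add: q'_def lt1)
      also have "\<dots> \<le> rate_dist d D q'" by (rule cond_one) (use q'p in \<open>simp add: pmf_on_def\<close>)
      finally have c1: "cond_rate_dist d D {..<1} (\<lambda>x u. \<Sum>y\<in>UNIV. QY y * ?U y u * QX (y, u) x) \<le> rate_dist d D q'" .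
      have km: "kl_div UNIV (\<lambda>s. \<Sum>t\<in>UNIV \<times> {..<1::nat}. (\<lambda>(x, y, u). QY y * ?U y u * QX (y, u) x) (s,t))
                    (\<lambda>s. \<Sum>t\<in>UNIV \<times> {..<1::nat}. (\<lambda>(x, y, u). P x y * ?U y u) (s,t))
           \<le> kl_div (UNIV \<times> UNIV \<times> {..<1}) (\<lambda>(x, y, u). QY y * ?U y u * QX (y, u) x) (\<lambda>(x, y, u). P x y * ?U y u)"
        by (rule kl_marginal) (auto simp: QYn QXn P_nonneg lt1)
      have "kl_div UNIV q' (\<lambda>x. \<Sum>y\<in>UNIV. P x y) = kl_div UNIV (\<lambda>s. \<Sum>t\<in>UNIV \<times> {..<1::nat}. (\<lambda>(x, y, u). QY y * ?U y u * QX (y, u) x) (s,t))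
                    (\<lambda>s. \<Sum>t\<in>UNIV \<times> {..<1::nat}. (\<lambda>(x, y, u). P x y * ?U y u) (s,t))"
        by (rule kl_cong) (simp add: q'_def lt1 sum.cartesian_product' lt1')
      with km have k1: "kl_div UNIV q' (\<lambda>x. \<Sum>y\<in>UNIV. P x y) \<le> kl_div (UNIV \<times> UNIV \<times> {..<1}) (\<lambda>(x, y, u). QY y * ?U y u * QX (y, u) x) (\<lambda>(x, y, u). P x y * ?U y u)"
        by simp
      have "ereal \<rho> * cond_rate_dist d D {..<1} (\<lambda>x u. \<Sum>y\<in>UNIV. QY y * ?U y u * QX (y, u) x)
              - kl_div (UNIV \<times> UNIV \<times> {..<1}) (\<lambda>(x, y, u). QY y * ?U y u * QX (y, u) x) (\<lambda>(x, y, u). P x y * ?U y u)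
           \<le> ereal \<rho> * rate_dist d D q' - kl_div UNIV q' (\<lambda>x. \<Sum>y\<in>UNIV. P x y)"
        by (rule ereal_minus_mono[OF ereal_mult_left_mono[OF c1] k1]) (use rho_pos in simp)
      also have "\<dots> \<le> ?R" by (rule SUP_upper) (use q'p in simp)
      finally show "ereal \<rho> * cond_rate_dist d D {..<1} (\<lambda>x u. \<Sum>y\<in>UNIV. QY y * ?U y u * QX (y, u) x)
              - kl_div (UNIV \<times> UNIV \<times> {..<1}) (\<lambda>(x, y, u). QY y * ?U y u * QX (y, u) x) (\<lambda>(x, y, u). P x y * ?U y u)
           \<le> ?R" .
    qed
    finally show "(INF kQ \<in> {(k::nat, QU). channel_on UNIV {..<k} QU \<and>
                    mutual_info UNIV {..<k} (\<lambda>y u. QY y * QU y u) \<le> ereal R}.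
          (case kQ of (k, QU) \<Rightarrow>
            SUP QX \<in> {QX. channel_on (UNIV \<times> {..<k}) UNIV QX}.
              ereal \<rho> * cond_rate_dist d D {..<k}
                  (\<lambda>x u. \<Sum>y\<in>UNIV. QY y * QU y u * QX (y, u) x)
              - kl_div (UNIV \<times> UNIV \<times> {..<k})
                  (\<lambda>(x, y, u). QY y * QU y u * QX (y, u) x)
                  (\<lambda>(x, y, u). P x y * QU y u))) \<le> ?R" .
  qed
next
  show "?R \<le> ?L"
  proof (rule SUP_least)
    fix q :: "'x \<Rightarrow> real" assume qm: "q \<in> {QX. pmf_on UNIV QX}"
    hence q: "pmf_on UNIV q" by simp
    have qn: "\<And>x. 0 \<le> q x" and q1: "(\<Sum>x\<in>UNIV. q x) = 1" using q by (auto simp: pmf_on_def)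
    define PX where "PX x = (\<Sum>y\<in>UNIV. P x y)" for x
    define PY where "PY y = (\<Sum>x\<in>UNIV. P x y)" for y
    have PXn: "\<And>x. 0 \<le> PX x" unfolding PX_def using P_nonneg by (simp add: sum_nonneg)
    have PYn: "\<And>y. 0 \<le> PY y" unfolding PY_def using P_nonneg by (simp add: sum_nonneg)
    show "ereal \<rho> * rate_dist d D q - kl_div UNIV q (\<lambda>x. \<Sum>y\<in>UNIV. P x y) \<le> ?L"
    proof (cases "R = 0 \<and> (\<forall>x. 0 < q x \<longrightarrow> 0 < PX x)")
      case True
      hence R0: "R = 0" and ac: "\<forall>x. 0 < q x \<longrightarrow> 0 < PX x" by auto
      have qc: "\<And>x. q x / PX x * PX x = q x"
      proof -
        fix x show "q x / PX x * PX x = q x"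
        proof (cases "q x = 0")
          case True thus ?thesis by simp
        next
          case False hence "0 < PX x" using ac qn[of x] by (simp add: less_le)
          thus ?thesis by simp
        qed
      qed
      define QY0 where "QY0 y = (\<Sum>x\<in>UNIV. q x / PX x * P x y)" for y
      define V where "V y x = (if 0 < QY0 y then q x / PX x * P x y / QY0 y else q x)" for y x
      have tn: "\<And>x y. 0 \<le> q x / PX x * P x y" using qn PXn P_nonneg by simp
      have QY0n: "\<And>y. 0 \<le> QY0 y" unfolding QY0_def using tn by (simp add: sum_nonneg)
      have QY01: "(\<Sum>y\<in>UNIV. QY0 y) = 1"
      proof -
        have "(\<Sum>y\<in>UNIV. QY0 y) = (\<Sum>x\<in>UNIV. q x / PX x * PX x)"
          unfolding QY0_def PX_def by (subst sum.swap) (simp add: sum_distrib_left)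
        thus ?thesis using qc q1 by simp
      qed
      have QY0p: "pmf_on UNIV QY0" using QY0n QY01 by (simp add: pmf_on_def)
      have Vp: "\<forall>y. pmf_on UNIV (V y)"
      proof
        fix y show "pmf_on UNIV (V y)"
        proof (cases "0 < QY0 y")
          case True
          have "(\<Sum>x\<in>UNIV. V y x) = (\<Sum>x\<in>UNIV. q x / PX x * P x y / QY0 y)"
            unfolding V_def using True by simp
          also have "\<dots> = QY0 y / QY0 y" unfolding QY0_def by (simp only: sum_divide_distrib)
          moreover have "\<forall>x. 0 \<le> V y x" unfolding V_def using True tn QY0n by (simp del: times_divide_eq_left times_divide_eq_right)
          ultimately show ?thesis using True unfolding pmf_on_def by simp
        next
          case False thus ?thesis using q unfolding V_def by simp
        qed
      qed
      have H2': "\<forall>x y. QY0 y * V y x = q x / PX x * P x y"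
      proof (intro allI)
        fix x y
        show "QY0 y * V y x = q x / PX x * P x y"
        proof (cases "0 < QY0 y")
          case True thus ?thesis unfolding V_def by simp
        next
          case False
          hence "QY0 y = 0" using QY0n[of y] by simp
          hence "q x / PX x * P x y = 0"
            unfolding QY0_def using sum_nonneg_eq_0_iff[of UNIV "\<lambda>x. q x / PX x * P x y"] tn by auto
          thus ?thesis using \<open>QY0 y = 0\<close> by simp
        qed
      qed
      have H1: "\<And>(k::nat) QU. channel_on UNIV {..<k} QU \<Longrightarrow> mutual_info UNIV {..<k} (\<lambda>y u. QY0 y * QU y u) \<le> ereal R
         \<Longrightarrow> \<forall>x. \<forall>u<k. (\<Sum>y\<in>UNIV. QY0 y * QU y u * V y x) = q x * (\<Sum>y\<in>UNIV. QY0 y * QU y u)"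
      proof -
        fix k :: nat and QU :: "'y \<Rightarrow> nat \<Rightarrow> real"
        assume ch: "channel_on UNIV {..<k} QU" and mi: "mutual_info UNIV {..<k} (\<lambda>y u. QY0 y * QU y u) \<le> ereal R"
        have QUn: "\<And>y u. u < k \<Longrightarrow> 0 \<le> QU y u" and QU1: "\<And>y. (\<Sum>u\<in>{..<k}. QU y u) = 1"
          using ch by (auto simp: channel_on_def pmf_on_def)
        define w where "w u = (\<Sum>y\<in>UNIV. QY0 y * QU y u)" for u
        have w1: "(\<Sum>u\<in>{..<k}. w u) = 1"
        proof -
          have "(\<Sum>u\<in>{..<k}. w u) = (\<Sum>y\<in>UNIV. QY0 y * (\<Sum>u\<in>{..<k}. QU y u))"
            unfolding w_def by (subst sum.swap) (simp add: sum_distrib_left)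
          thus ?thesis using QU1 QY01 by simp
        qed
        have s1: "(\<Sum>z\<in>UNIV \<times> {..<k}. (\<lambda>(a,b). QY0 a * QU a b) z) = 1"
          by (simp add: sum.cartesian_product' sum_distrib_left[symmetric] QU1 QY01)
        have s2: "(\<Sum>z\<in>UNIV \<times> {..<k}. (\<lambda>(a,b). (\<Sum>b'\<in>{..<k}. QY0 a * QU a b') * (\<Sum>a'\<in>UNIV. QY0 a' * QU a' b)) z) = 1"
          by (simp add: sum.cartesian_product' sum_distrib_left[symmetric] QU1 QY01 w_def[symmetric] w1)
        have eq: "\<forall>z\<in>UNIV \<times> {..<k}. (\<lambda>(a,b). QY0 a * QU a b) z = (\<lambda>(a,b). (\<Sum>b'\<in>{..<k}. QY0 a * QU a b') * (\<Sum>a'\<in>UNIV. QY0 a' * QU a' b)) z"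
          apply (rule gibbs_eq)
          subgoal by simp
          subgoal by (auto simp: QY0n QUn)
          subgoal by (auto intro!: mult_nonneg_nonneg sum_nonneg simp: QY0n QUn)
          subgoal using s1 s2 by simp
          subgoal using mi R0 unfolding mutual_info_def zero_ereal_def by simp
          done
        have ind: "\<And>y u. u < k \<Longrightarrow> QY0 y * QU y u = QY0 y * w u"
          using eq by (auto simp: sum_distrib_left[symmetric] QU1 w_def)
        show "\<forall>x. \<forall>u<k. (\<Sum>y\<in>UNIV. QY0 y * QU y u * V y x) = q x * (\<Sum>y\<in>UNIV. QY0 y * QU y u)"
        proof (intro allI impI)
          fix x u assume u: "u < k"
          have "(\<Sum>y\<in>UNIV. QY0 y * QU y u * V y x) = (\<Sum>y\<in>UNIV. w u * (QY0 y * V y x))"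
            by (rule sum.cong) (auto simp: ind[OF u] mult_ac)
          also have "\<dots> = w u * (\<Sum>y\<in>UNIV. q x / PX x * P x y)"
            by (simp add: H2' sum_distrib_left)
          also have "\<dots> = w u * q x"
          proof -
            have "(\<Sum>y\<in>UNIV. q x / PX x * P x y) = q x / PX x * PX x"
              unfolding PX_def by (simp only: sum_distrib_left)
            thus ?thesis using qc by simp
          qed
          finally show "(\<Sum>y\<in>UNIV. QY0 y * QU y u * V y x) = q x * (\<Sum>y\<in>UNIV. QY0 y * QU y u)"
            by (simp add: w_def mult_ac)
        qed
      qed
      show ?thesis
        by (rule lower_gen[OF P_nonneg rho_pos q QY0p Vp H1]) (use H2' in \<open>unfold PX_def, blast\<close>)
    next
      case False
      have PY1: "(\<Sum>y\<in>UNIV. PY y) = 1" unfolding PY_def using P_sum by (subst sum.swap) simp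
      have PYp: "pmf_on UNIV PY" using PYn PY1 by (simp add: pmf_on_def)
      have Vp: "\<forall>y. pmf_on UNIV ((\<lambda>y. q) y)" using q by simp
      have H1: "\<And>(k::nat) QU. channel_on UNIV {..<k} QU \<Longrightarrow> mutual_info UNIV {..<k} (\<lambda>y u. PY y * QU y u) \<le> ereal R
         \<Longrightarrow> \<forall>x. \<forall>u<k. (\<Sum>y\<in>UNIV. PY y * QU y u * (\<lambda>y. q) y x) = q x * (\<Sum>y\<in>UNIV. PY y * QU y u)"
        by (simp add: sum_distrib_left mult_ac)
      have H2: "(\<forall>x. 0 < q x \<longrightarrow> 0 < (\<Sum>y\<in>UNIV. P x y)) \<Longrightarrow> \<forall>x y. PY y * (\<lambda>y. q) y x = q x / (\<Sum>y\<in>UNIV. P x y) * P x y"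
      proof (intro allI)
        fix x y assume ac: "\<forall>x. 0 < q x \<longrightarrow> 0 < (\<Sum>y\<in>UNIV. P x y)"
        have "\<forall>x. 0 < q x \<longrightarrow> 0 < PX x" using ac unfolding PX_def .
        hence "R \<noteq> 0" using False by blast
        hence "\<forall>x y. P x y = (\<Sum>y'\<in>UNIV. P x y') * (\<Sum>x'\<in>UNIV. P x' y)" using hyp by blast
        hence ind: "\<forall>x y. P x y = PX x * PY y" unfolding PX_def PY_def .
        show "PY y * (\<lambda>y. q) y x = q x / (\<Sum>y\<in>UNIV. P x y) * P x y"
        proof (cases "q x = 0")
          case True thus ?thesis by simp
        next
          case False
          hence "0 < PX x" using ac qn[of x] unfolding PX_def by (simp add: less_le)
          thus ?thesis using ind unfolding PX_def[symmetric] by simp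
        qed
      qed
      show ?thesis by (rule lower_gen[OF P_nonneg rho_pos q PYp Vp H1 H2])
    qed
  qed
qed

end
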